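(* Let $(X,d)$ and $(\Lambda,\rho)$ be compact metric spaces, let $\omega:\Lambda\times X\to X$ be continuous, and fix a Borel probability measure $p$ on $\Lambda$. Suppose $\omega$ is $\mathbb{P}$-weakly hyperbolic, i.e. $\mathbb{P}(S)=1$ where $$S=\{\sigma\in\Omega:\ \lim_{n\to\infty}\operatorname{Diam}(\omega_{\sigma_1}\circ\cdots\circ\omega_{\sigma_n}(X))=0\}.$$ Then the operator $T_p:\mathcal{M}_1(X)\to\mathcal{M}_1(X)$ has a unique fixed point $\mu_p$, and $T_p^n(\nu)\to\mu_p$ in the weak$^*$ topology for every $\nu\in\mathcal{M}_1(X)$. Furthermore, if $p(U)>0$ for every nonempty open set $U\subset\Lambda$, then $\operatorname{supp}(\mu_p)=\overline{\Gamma(S)}$.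
   Context: For $\lambda\in\Lambda$, $\omega_\lambda:X\to X$ is $\omega_\lambda(x)=\omega(\lambda,x)$. $\Omega=\Lambda^{\mathbb{N}}$ with the product topology, and $\mathbb{P}=p^{\mathbb{N}}$ is the product (Bernoulli) measure on $\Omega$ induced by $p$. $\operatorname{Diam}(A)=\sup\{d(x,y):x,y\in A\}$. $\mathcal{M}_1(X)$ is the set of Borel probability measures on $X$ with the weak$^*$ topology. The transfer operator is $T_p(\mu)(B)=\int_\Lambda \mu(\omega_\lambda^{-1}(B))\,dp(\lambda)$ for Borel $B\subset X$. For $\sigma\in S$ the nested compact sets $\omega_{\sigma_1}\circ\cdots\circ\omega_{\sigma_n}(X)$ have intersection consisting of a single point, denoted $\Gamma(\sigma)$; this defines $\Gamma:S\to X$ (equivalently $\Gamma(\sigma)=\lim_n \omega_{\sigma_1}\circ\cdots\circ\omega_{\sigma_n}(x)$ for any $x\in X$). *)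

theory Defs
  imports "HOL-Probability.Probability"
begin

text \<open>Composition: ifs_comp w s n = w (s 0) o w (s 1) o ... o w (s (n-1))
  (the paper's sigma_1, ..., sigma_n are s 0, ..., s (n-1)).\<close>
fun ifs_comp :: "('l \<Rightarrow> 'x \<Rightarrow> 'x) \<Rightarrow> (nat \<Rightarrow> 'l) \<Rightarrow> nat \<Rightarrow> 'x \<Rightarrow> 'x" where
  "ifs_comp w s 0 = id"
| "ifs_comp w s (Suc n) = ifs_comp w s n \<circ> w (s n)"

text \<open>The set S of sequences along which the diameters of the nested images shrink to 0
  (the whole type 'x plays the role of the compact space X).\<close>
definition hyp_set :: "('l \<Rightarrow> 'x::metric_space \<Rightarrow> 'x) \<Rightarrow> (nat \<Rightarrow> 'l) set" where
  "hyp_set w = {s. (\<lambda>n. diameter (range (ifs_comp w s n))) \<longlonglongrightarrow> 0}"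

definition ifs_Gamma :: "('l \<Rightarrow> 'x \<Rightarrow> 'x) \<Rightarrow> (nat \<Rightarrow> 'l) \<Rightarrow> 'x" where
  "ifs_Gamma w s = (THE x. x \<in> (\<Inter>n. range (ifs_comp w s n)))"

definition prob_measures :: "'x::topological_space measure set" where
  "prob_measures = {\<mu>. prob_space \<mu> \<and> sets \<mu> = sets borel}"

definition transfer_op :: "'l measure \<Rightarrow> ('l \<Rightarrow> 'x::topological_space \<Rightarrow> 'x) \<Rightarrow> 'x measure \<Rightarrow> 'x measure" where
  "transfer_op p w \<mu> =
     measure_of UNIV (sets borel) (\<lambda>B. \<integral>\<^sup>+ l. emeasure \<mu> (w l -` B) \<partial>p)"

definition weak_star_conv :: "(nat \<Rightarrow> 'x::topological_space measure) \<Rightarrow> 'x measure \<Rightarrow> bool" where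
  "weak_star_conv Ms M \<longleftrightarrow>
     (\<forall>f :: 'x \<Rightarrow> real. continuous_on UNIV f \<and> bounded (range f) \<longrightarrow>
        (\<lambda>n. integral\<^sup>L (Ms n) f) \<longlonglongrightarrow> integral\<^sup>L M f)"

definition measure_support :: "'x::topological_space measure \<Rightarrow> 'x set" where
  "measure_support \<mu> = {x. \<forall>U. open U \<and> x \<in> U \<longrightarrow> emeasure \<mu> U > 0}"

end

theory Submission
  imports Defs
begin

lemma compact_metric_countable_basis:
  assumes "compact (UNIV :: 'a::metric_space set)"
  shows "\<exists>B::'a set set. countable B \<and> topological_basis B"
proof -
  have ex: "\<forall>k::nat. \<exists>C::'a set. finite C \<and> UNIV \<subseteq> (\<Union>c\<in>C. ball c (1 / Suc k))"
  proof
    fix k :: nat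
    have cov: "UNIV \<subseteq> (\<Union>c\<in>(UNIV::'a set). ball c (1 / Suc k))"
    proof
      fix x :: 'a have "x \<in> ball x (1 / Suc k)" by simp
      then show "x \<in> (\<Union>c\<in>UNIV. ball c (1 / Suc k))" by (rule UN_I[rotated]) simp
    qed
    obtain C' :: "'a set" where "C' \<subseteq> UNIV" "finite C'" "UNIV \<subseteq> (\<Union>c\<in>C'. ball c (1 / Suc k))"
      apply (rule compactE_image[OF assms(1) _ cov]) apply simp by simp
    then show "\<exists>C::'a set. finite C \<and> UNIV \<subseteq> (\<Union>c\<in>C. ball c (1 / Suc k))" by blast
  qed
  obtain C :: "nat \<Rightarrow> 'a set" where C0: "\<forall>k. finite (C k) \<and> (UNIV::'a set) \<subseteq> (\<Union>c\<in>C k. ball c (1 / Suc k))"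
    using choice[OF ex] by blast
  then have C: "\<And>k. finite (C k)" "\<And>k. UNIV \<subseteq> (\<Union>c\<in>C k. ball c (1 / Suc k))" by auto
  define B where "B = (\<Union>k. (\<lambda>c. ball c (1 / Suc k)) ` C k)"
  have "countable B" unfolding B_def using C(1) by (simp add: countable_finite)
  moreover have "topological_basis B"
  proof (subst topological_basis_iff)
    show "\<And>B'. B' \<in> B \<Longrightarrow> open B'" unfolding B_def by auto
    show "\<forall>O'. open O' \<longrightarrow> (\<forall>x\<in>O'. \<exists>B'\<in>B. x \<in> B' \<and> B' \<subseteq> O')"
    proof (intro allI impI ballI)
      fix O' :: "'a set" and x :: 'a assume "open O'" "x \<in> O'"
      then obtain e where e: "e > 0" "ball x e \<subseteq> O'" by (meson open_contains_ball)
      obtain k :: nat where k: "1 / Suc k < e / 2"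
        using e by (metis half_gt_zero nat_approx_posE)
      obtain c where c: "c \<in> C k" "x \<in> ball c (1 / Suc k)" using C(2)[of k] by blast
      have "ball c (1 / Suc k) \<subseteq> ball x e"
      proof
        fix y assume "y \<in> ball c (1 / Suc k)"
        then have "dist c y < 1 / Suc k" by simp
        moreover have "dist x c < 1 / Suc k" using c by (simp add: dist_commute)
        moreover have "dist x y \<le> dist x c + dist c y" by (rule dist_triangle)
        ultimately show "y \<in> ball x e" using k by simp
      qed
      then show "\<exists>B'\<in>B. x \<in> B' \<and> B' \<subseteq> O'" using c e unfolding B_def by blast
    qed
  qed
  ultimately show ?thesis by blast
qed

lemma open_in_pair_borel:
  assumes "compact (UNIV :: 'a::metric_space set)" "compact (UNIV :: 'b::metric_space set)"
    and "open (Ov :: ('a \<times> 'b) set)"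
  shows "Ov \<in> sets (borel \<Otimes>\<^sub>M borel)"
proof -
  obtain A :: "'a set set" where A: "countable A" "topological_basis A"
    using compact_metric_countable_basis[OF assms(1)] by blast
  obtain B :: "'b set set" where B: "countable B" "topological_basis B"
    using compact_metric_countable_basis[OF assms(2)] by blast
  let ?AB = "(\<lambda>(a, b). a \<times> b) ` (A \<times> B)"
  have tb: "topological_basis ?AB" by (rule topological_basis_prod[OF A(2) B(2)])
  then obtain F where F: "F \<subseteq> ?AB" "Ov = \<Union>F"
    using assms(3) unfolding topological_basis_def by blast
  have "countable (A \<times> B)" using A(1) B(1) by simp
  then have "countable ?AB" by simp
  then have "countable F" using F(1) by (rule countable_subset[rotated])
  moreover have "X \<in> sets (borel \<Otimes>\<^sub>M borel)" if "X \<in> F" for X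
  proof -
    from that F(1) obtain a b where "X = a \<times> b" "a \<in> A" "b \<in> B" by auto
    moreover have "open a" "open b" using \<open>a \<in> A\<close> \<open>b \<in> B\<close> A(2) B(2) topological_basis_open by auto
    ultimately show ?thesis by auto
  qed
  ultimately have "\<Union>F \<in> sets (borel \<Otimes>\<^sub>M borel)"
    by (intro sets.countable_Union) auto
  then show ?thesis using F(2) by simp
qed

lemma cont_pair_measurable:
  fixes g :: "'a::metric_space \<times> 'b::metric_space \<Rightarrow> 'c::topological_space"
  assumes "compact (UNIV :: 'a set)" "compact (UNIV :: 'b set)" "continuous_on UNIV g"
  shows "g \<in> (borel \<Otimes>\<^sub>M borel) \<rightarrow>\<^sub>M borel"
proof (rule borel_measurableI)
  fix S :: "'c set" assume "open S"
  then have "open (g -` S)" using assms(3) by (simp add: continuous_on_open_vimage)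
  then show "g -` S \<inter> space (borel \<Otimes>\<^sub>M borel) \<in> sets (borel \<Otimes>\<^sub>M borel)"
    using open_in_pair_borel[OF assms(1,2)] by (simp add: space_pair_measure)
qed


locale ifs =
  fixes w :: "'l::metric_space \<Rightarrow> 'x::metric_space \<Rightarrow> 'x" and p :: "'l measure"
  assumes cX: "compact (UNIV :: 'x set)" and cL: "compact (UNIV :: 'l set)"
    and cont: "continuous_on UNIV (\<lambda>(l, x). w l x)"
    and prob: "prob_space p" and sp: "sets p = sets borel"
    and hyp: "measure (\<Pi>\<^sub>M i\<in>(UNIV :: nat set). p) (hyp_set w) = 1"
begin

abbreviation "P \<equiv> \<Pi>\<^sub>M i\<in>(UNIV :: nat set). p"
abbreviation "H \<equiv> hyp_set w"

lemma seqsp: "sequence_space p"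
  unfolding sequence_space_def product_prob_space_def product_prob_space_axioms_def
    product_sigma_finite_def using prob by (simp add: prob_space_imp_sigma_finite)

sublocale PS: sequence_space p by (rule seqsp)

lemma space_p[simp]: "space p = UNIV"
  using sets_eq_imp_space_eq[OF sp] by simp

lemma space_P[simp]: "space P = UNIV"
  by (simp add: space_PiM)

lemma sets_P_pair: "sets (p \<Otimes>\<^sub>M M) = sets (borel \<Otimes>\<^sub>M M)"
  using sp by (rule sets_pair_measure_cong) simp

lemma cont_w: "continuous_on UNIV (w l)"
proof -
  have "continuous_on UNIV ((\<lambda>(l, x). w l x) \<circ> (\<lambda>x. (l, x)))"
    by (rule continuous_on_compose) (auto intro!: continuous_intros continuous_on_subset[OF cont])
  then show ?thesis by (simp add: o_def)
qed

lemma cont_comp: "continuous_on UNIV (ifs_comp w s n)"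
proof (induction n)
  case 0 then show ?case by (simp add: continuous_on_id)
next
  case (Suc n) then show ?case
    using continuous_on_compose[OF cont_w[of "s n"] continuous_on_subset[OF Suc.IH subset_UNIV]] by simp
qed

lemma w_meas_borel: "(\<lambda>(l, x). w l x) \<in> (borel \<Otimes>\<^sub>M borel) \<rightarrow>\<^sub>M borel"
  by (rule cont_pair_measurable[OF cL cX cont])

lemma w_meas[measurable (raw)]:
  assumes "f \<in> N \<rightarrow>\<^sub>M p" "g \<in> N \<rightarrow>\<^sub>M borel"
  shows "(\<lambda>z. w (f z) (g z)) \<in> N \<rightarrow>\<^sub>M borel"
proof -
  have "f \<in> N \<rightarrow>\<^sub>M borel" using assms(1) measurable_cong_sets[OF refl sp] by blast
  then have "(\<lambda>z. (f z, g z)) \<in> N \<rightarrow>\<^sub>M (borel \<Otimes>\<^sub>M borel)"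
    using assms(2) by (rule measurable_Pair)
  from measurable_comp[OF this w_meas_borel] show ?thesis by (simp add: o_def)
qed

lemma comp_meas[measurable (raw)]:
  assumes "f \<in> N \<rightarrow>\<^sub>M P" "g \<in> N \<rightarrow>\<^sub>M borel"
  shows "(\<lambda>z. ifs_comp w (f z) n (g z)) \<in> N \<rightarrow>\<^sub>M borel"
  using assms(2)
proof (induction n arbitrary: g)
  case 0 then show ?case by simp
next
  case (Suc n)
  have "(\<lambda>z. w (f z n) (g z)) \<in> N \<rightarrow>\<^sub>M borel"
    using assms(1) Suc.prems by measurable
  from Suc.IH[OF this] show ?case by simp
qed

lemma comp_head: "ifs_comp w (case_nat l s) (Suc n) = w l \<circ> ifs_comp w s n"
  by (induction n) (auto simp: fun_eq_iff)

end

context ifs begin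

lemma pm_simps:
  assumes "\<mu> \<in> prob_measures"
  shows "prob_space \<mu>" "sets \<mu> = sets borel" "space \<mu> = UNIV"
  using assms sets_eq_imp_space_eq[of \<mu> borel] by (auto simp: prob_measures_def)

lemma snd_meas:
  assumes "sets M = sets borel"
  shows "snd \<in> (N \<Otimes>\<^sub>M M) \<rightarrow>\<^sub>M borel"
  using measurable_snd[of N M] measurable_cong_sets[OF refl assms] by blast

lemma f_meas:
  assumes "\<mu> \<in> prob_measures"
  shows "(\<lambda>(l, x). w l x) \<in> (p \<Otimes>\<^sub>M \<mu>) \<rightarrow>\<^sub>M borel"
proof -
  have "(\<lambda>z. w (fst z) (snd z)) \<in> (p \<Otimes>\<^sub>M \<mu>) \<rightarrow>\<^sub>M borel"
    by (rule w_meas[OF measurable_fst snd_meas[OF pm_simps(2)[OF assms]]])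
  then show ?thesis by (simp add: split_beta')
qed

lemma g_meas:
  assumes "\<nu> \<in> prob_measures"
  shows "(\<lambda>(s, x). ifs_comp w s n x) \<in> (P \<Otimes>\<^sub>M \<nu>) \<rightarrow>\<^sub>M borel"
proof -
  have "(\<lambda>z. ifs_comp w (fst z) n (snd z)) \<in> (P \<Otimes>\<^sub>M \<nu>) \<rightarrow>\<^sub>M borel"
    by (rule comp_meas[OF measurable_fst snd_meas[OF pm_simps(2)[OF assms]]])
  then show ?thesis by (simp add: split_beta')
qed

lemma emeasure_distr_pair:
  assumes "\<nu> \<in> prob_measures" "h \<in> (M \<Otimes>\<^sub>M \<nu>) \<rightarrow>\<^sub>M borel" "B \<in> sets borel"
  shows "emeasure (distr (M \<Otimes>\<^sub>M \<nu>) borel h) B = (\<integral>\<^sup>+ s. emeasure \<nu> {x. h (s, x) \<in> B} \<partial>M)"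
proof -
  interpret N: prob_space \<nu> using pm_simps[OF assms(1)] by simp
  have "emeasure (distr (M \<Otimes>\<^sub>M \<nu>) borel h) B = emeasure (M \<Otimes>\<^sub>M \<nu>) (h -` B \<inter> space (M \<Otimes>\<^sub>M \<nu>))"
    by (rule emeasure_distr[OF assms(2,3)])
  also have "\<dots> = (\<integral>\<^sup>+ s. emeasure \<nu> (Pair s -` (h -` B \<inter> space (M \<Otimes>\<^sub>M \<nu>))) \<partial>M)"
    by (rule N.emeasure_pair_measure_alt) (rule measurable_sets[OF assms(2,3)])
  also have "\<dots> = (\<integral>\<^sup>+ s. emeasure \<nu> {x. h (s, x) \<in> B} \<partial>M)"
    by (rule nn_integral_cong) (auto simp: space_pair_measure pm_simps[OF assms(1)] intro!: arg_cong[where f="emeasure \<nu>"])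
  finally show ?thesis .
qed

lemma T_distr:
  assumes "\<mu> \<in> prob_measures"
  shows "transfer_op p w \<mu> = distr (p \<Otimes>\<^sub>M \<mu>) borel (\<lambda>(l, x). w l x)"
proof -
  note meas = f_meas[OF assms]
  have "transfer_op p w \<mu> = measure_of UNIV (sets borel) (emeasure (distr (p \<Otimes>\<^sub>M \<mu>) borel (\<lambda>(l, x). w l x)))"
    unfolding transfer_op_def
  proof (rule measure_of_eq)
    show "sets borel \<subseteq> Pow UNIV" by simp
    fix a :: "'x set" assume "a \<in> sigma_sets UNIV (sets borel)"
    then have a: "a \<in> sets borel" using sets.sigma_sets_eq[of "borel::'x measure"] by simp
    show "(\<integral>\<^sup>+ l. emeasure \<mu> (w l -` a) \<partial>p) = emeasure (distr (p \<Otimes>\<^sub>M \<mu>) borel (\<lambda>(l, x). w l x)) a"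
      by (subst emeasure_distr_pair[OF assms meas a]) (simp add: vimage_def)
  qed
  also have "\<dots> = distr (p \<Otimes>\<^sub>M \<mu>) borel (\<lambda>(l, x). w l x)"
    using measure_of_of_measure[of "distr (p \<Otimes>\<^sub>M \<mu>) borel (\<lambda>(l, x). w l x)"] by simp
  finally show ?thesis .
qed

lemma T_prob:
  assumes "\<mu> \<in> prob_measures"
  shows "transfer_op p w \<mu> \<in> prob_measures"
proof -
  have "prob_space (p \<Otimes>\<^sub>M \<mu>)" by (rule prob_space_pair[OF prob pm_simps(1)[OF assms]])
  then have "prob_space (distr (p \<Otimes>\<^sub>M \<mu>) borel (\<lambda>(l, x). w l x))"
    by (rule prob_space.prob_space_distr[OF _ f_meas[OF assms]])
  then show ?thesis by (simp add: T_distr[OF assms] prob_measures_def)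
qed

lemma T_iter_prob:
  assumes "\<nu> \<in> prob_measures"
  shows "(transfer_op p w ^^ n) \<nu> \<in> prob_measures"
  by (induction n) (auto simp: assms T_prob)

lemma T_integral:
  fixes f :: "'x \<Rightarrow> real"
  assumes "\<mu> \<in> prob_measures" "f \<in> borel_measurable borel" "\<And>x. norm (f x) \<le> B"
  shows "integral\<^sup>L (transfer_op p w \<mu>) f = (\<integral>l. (\<integral>x. f (w l x) \<partial>\<mu>) \<partial>p)"
proof -
  interpret N: prob_space \<mu> using pm_simps[OF assms(1)] by simp
  interpret PP: pair_sigma_finite p \<mu>
    by (simp add: N.sigma_finite_measure_axioms pair_sigma_finite.intro prob prob_space_imp_sigma_finite)
  interpret PS2: prob_space "p \<Otimes>\<^sub>M \<mu>" by (rule prob_space_pair[OF prob pm_simps(1)[OF assms(1)]])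
  have m: "(\<lambda>z. f (case z of (l, x) \<Rightarrow> w l x)) \<in> borel_measurable (p \<Otimes>\<^sub>M \<mu>)"
    using measurable_comp[OF f_meas[OF assms(1)] assms(2)] by (simp add: o_def)
  have "integral\<^sup>L (transfer_op p w \<mu>) f = integral\<^sup>L (p \<Otimes>\<^sub>M \<mu>) (\<lambda>z. f (case z of (l, x) \<Rightarrow> w l x))"
    unfolding T_distr[OF assms(1)] by (rule integral_distr[OF f_meas[OF assms(1)] assms(2)])
  also have "\<dots> = (\<integral>l. (\<integral>x. f (w l x) \<partial>\<mu>) \<partial>p)"
    by (rule PP.integral_fst'[symmetric, where f="\<lambda>z. f (case z of (l, x) \<Rightarrow> w l x)", simplified])
       (rule PS2.integrable_const_bound[OF _ m, of B], intro AE_I2, metis assms(3) real_norm_def)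
  finally show ?thesis .
qed

lemma T_emeasure:
  assumes "\<mu> \<in> prob_measures" "B \<in> sets borel"
  shows "emeasure (transfer_op p w \<mu>) B = (\<integral>\<^sup>+ l. emeasure \<mu> (w l -` B) \<partial>p)"
  by (simp add: T_distr[OF assms(1)] emeasure_distr_pair[OF assms(1) f_meas[OF assms(1)] assms(2)] vimage_def)

lemma Q_emeasure:
  assumes "\<nu> \<in> prob_measures" "B \<in> sets borel"
  shows "emeasure (distr (P \<Otimes>\<^sub>M \<nu>) borel (\<lambda>(s, x). ifs_comp w s n x)) B
       = (\<integral>\<^sup>+ s. emeasure \<nu> {x. ifs_comp w s n x \<in> B} \<partial>P)"
  by (simp add: emeasure_distr_pair[OF assms(1) g_meas[OF assms(1)] assms(2)])

lemma Q_emeasure_meas: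
  assumes "\<nu> \<in> prob_measures" "B \<in> sets borel"
  shows "(\<lambda>s. emeasure \<nu> {x. ifs_comp w s n x \<in> B}) \<in> borel_measurable P"
proof -
  interpret N: prob_space \<nu> using pm_simps[OF assms(1)] by simp
  let ?A = "(\<lambda>(s, x). ifs_comp w s n x) -` B \<inter> space (P \<Otimes>\<^sub>M \<nu>)"
  have "(\<lambda>s. emeasure \<nu> (Pair s -` ?A)) \<in> borel_measurable P"
    by (rule N.measurable_emeasure_Pair[OF measurable_sets[OF g_meas[OF assms(1)] assms(2)]])
  moreover have "(\<lambda>s. emeasure \<nu> (Pair s -` ?A)) = (\<lambda>s. emeasure \<nu> {x. ifs_comp w s n x \<in> B})"
    by (auto simp: space_pair_measure pm_simps[OF assms(1)] intro!: arg_cong[where f="emeasure \<nu>"])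
  ultimately show ?thesis by simp
qed

lemma cn_meas: "(\<lambda>(l, s). case_nat l s) \<in> (p \<Otimes>\<^sub>M P) \<rightarrow>\<^sub>M P"
  by measurable

lemma head_nn:
  assumes g: "g \<in> borel_measurable P"
  shows "(\<integral>\<^sup>+ s. g s \<partial>P) = (\<integral>\<^sup>+ l. (\<integral>\<^sup>+ s. g (case_nat l s) \<partial>P) \<partial>p)"
proof -
  have "(\<integral>\<^sup>+ s. g s \<partial>P) = (\<integral>\<^sup>+ s. g s \<partial>(distr (p \<Otimes>\<^sub>M P) P (\<lambda>(l, s). case_nat l s)))"
    using PS.PiM_iter by simp
  also have "\<dots> = (\<integral>\<^sup>+ z. g (case z of (l, s) \<Rightarrow> case_nat l s) \<partial>(p \<Otimes>\<^sub>M P))"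
    by (rule nn_integral_distr[OF cn_meas]) (simp add: g)
  also have "\<dots> = (\<integral>\<^sup>+ l. (\<integral>\<^sup>+ s. g (case_nat l s) \<partial>P) \<partial>p)"
  proof -
    have "(\<lambda>z. g (case z of (l, s) \<Rightarrow> case_nat l s)) \<in> borel_measurable (p \<Otimes>\<^sub>M P)"
      using measurable_comp[OF cn_meas g] by (simp add: o_def)
    from PS.nn_integral_fst[OF this] show ?thesis by simp
  qed
  finally show ?thesis .
qed

lemma T_iter:
  assumes "\<nu> \<in> prob_measures"
  shows "(transfer_op p w ^^ n) \<nu> = distr (P \<Otimes>\<^sub>M \<nu>) borel (\<lambda>(s, x). ifs_comp w s n x)"
proof (induction n)
  case 0
  show ?case
  proof (rule measure_eqI)
    show "sets ((transfer_op p w ^^ 0) \<nu>) = sets (distr (P \<Otimes>\<^sub>M \<nu>) borel (\<lambda>(s, x). ifs_comp w s 0 x))"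
      using pm_simps[OF assms] by simp
    fix B assume "B \<in> sets ((transfer_op p w ^^ 0) \<nu>)"
    then have B: "B \<in> sets borel" using pm_simps[OF assms] by simp
    show "emeasure ((transfer_op p w ^^ 0) \<nu>) B = emeasure (distr (P \<Otimes>\<^sub>M \<nu>) borel (\<lambda>(s, x). ifs_comp w s 0 x)) B"
      by (subst Q_emeasure[OF assms B]) (simp add: PS.emeasure_space_1[simplified])
  qed
next
  case (Suc n)
  have pmn: "(transfer_op p w ^^ n) \<nu> \<in> prob_measures" by (rule T_iter_prob[OF assms])
  show ?case
  proof (rule measure_eqI)
    show "sets ((transfer_op p w ^^ Suc n) \<nu>) = sets (distr (P \<Otimes>\<^sub>M \<nu>) borel (\<lambda>(s, x). ifs_comp w s (Suc n) x))"
      using pm_simps[OF T_iter_prob[OF assms, of "Suc n"]] by simp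
    fix B assume "B \<in> sets ((transfer_op p w ^^ Suc n) \<nu>)"
    then have B: "B \<in> sets borel" using pm_simps[OF T_iter_prob[OF assms, of "Suc n"]] by simp
    have wB: "w l -` B \<in> sets borel" for l
      using measurable_sets[OF borel_measurable_continuous_onI[OF cont_w] B] by simp
    have "emeasure ((transfer_op p w ^^ Suc n) \<nu>) B = emeasure (transfer_op p w ((transfer_op p w ^^ n) \<nu>)) B"
      by simp
    also have "\<dots> = (\<integral>\<^sup>+ l. emeasure ((transfer_op p w ^^ n) \<nu>) (w l -` B) \<partial>p)"
      by (rule T_emeasure[OF pmn B])
    also have "\<dots> = (\<integral>\<^sup>+ l. (\<integral>\<^sup>+ s. emeasure \<nu> {x. ifs_comp w s n x \<in> w l -` B} \<partial>P) \<partial>p)"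
      by (simp add: Suc.IH Q_emeasure[OF assms wB])
    also have "\<dots> = (\<integral>\<^sup>+ l. (\<integral>\<^sup>+ s. emeasure \<nu> {x. ifs_comp w (case_nat l s) (Suc n) x \<in> B} \<partial>P) \<partial>p)"
      unfolding comp_head by simp
    also have "\<dots> = (\<integral>\<^sup>+ s. emeasure \<nu> {x. ifs_comp w s (Suc n) x \<in> B} \<partial>P)"
      by (rule head_nn[symmetric, OF Q_emeasure_meas[OF assms B]])
    also have "\<dots> = emeasure (distr (P \<Otimes>\<^sub>M \<nu>) borel (\<lambda>(s, x). ifs_comp w s (Suc n) x)) B"
      by (rule Q_emeasure[OF assms B, symmetric])
    finally show "emeasure ((transfer_op p w ^^ Suc n) \<nu>) B = emeasure (distr (P \<Otimes>\<^sub>M \<nu>) borel (\<lambda>(s, x). ifs_comp w s (Suc n) x)) B" .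
  qed
qed

lemma range_comp_mono:
  assumes "m \<le> n" shows "range (ifs_comp w s n) \<subseteq> range (ifs_comp w s m)"
proof -
  have "range (ifs_comp w s (Suc k)) \<subseteq> range (ifs_comp w s k)" for k by auto
  then show ?thesis by (rule lift_Suc_antimono_le[OF _ assms])
qed

lemma compact_range_comp: "compact (range (ifs_comp w s n))"
  by (rule compact_continuous_image[OF cont_comp cX])

lemma dist_le_diam:
  assumes "x \<in> range (ifs_comp w s n)" "y \<in> range (ifs_comp w s n)"
  shows "dist x y \<le> diameter (range (ifs_comp w s n))"
  by (rule diameter_bounded_bound[OF compact_imp_bounded[OF compact_range_comp] assms])

lemma H_lim: "s \<in> H \<Longrightarrow> (\<lambda>n. diameter (range (ifs_comp w s n))) \<longlonglongrightarrow> 0"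
  by (simp add: hyp_set_def)

lemma Gamma_props:
  assumes "s \<in> H"
  shows "\<And>n. ifs_Gamma w s \<in> range (ifs_comp w s n)"
proof -
  define a where "a k = ifs_comp w s k undefined" for k
  have "seq_compact (UNIV::'x set)" by (rule compact_imp_seq_compact[OF cX])
  then obtain l r where r: "strict_mono (r :: nat \<Rightarrow> nat)" "(a \<circ> r) \<longlonglongrightarrow> l"
    by (rule seq_compactE) auto
  have lin: "l \<in> range (ifs_comp w s n)" for n
  proof (rule Lim_in_closed_set[OF compact_imp_closed[OF compact_range_comp] _ _ r(2)])
    show "\<forall>\<^sub>F k in sequentially. (a \<circ> r) k \<in> range (ifs_comp w s n)"
    proof (rule eventually_sequentiallyI[of n])
      fix k assume "n \<le> k"
      then have "n \<le> r k" using seq_suble[OF r(1), of k] by linarith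
      then show "(a \<circ> r) k \<in> range (ifs_comp w s n)"
        using range_comp_mono[of n "r k" s] by (auto simp: a_def)
    qed
  qed simp
  have uniq: "y = z" if "\<And>n. y \<in> range (ifs_comp w s n)" "\<And>n. z \<in> range (ifs_comp w s n)" for y z
  proof -
    have "dist y z \<le> 0"
    proof (rule LIMSEQ_le_const[OF H_lim[OF assms]])
      show "\<exists>N. \<forall>n\<ge>N. dist y z \<le> diameter (range (ifs_comp w s n))"
      proof (intro exI allI impI)
        fix n :: nat show "dist y z \<le> diameter (range (ifs_comp w s n))" by (rule dist_le_diam[OF that])
      qed
    qed
    then show ?thesis by simp
  qed
  have l1: "l \<in> (\<Inter>n. range (ifs_comp w s n))" using lin by (simp only: INT_iff) simp
  have l2: "y = l" if "y \<in> (\<Inter>n. range (ifs_comp w s n))" for y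
    using that by (intro uniq lin) (simp only: INT_iff, simp)
  have "ifs_Gamma w s = l" unfolding ifs_Gamma_def by (rule the_equality[where P="\<lambda>x. x \<in> (\<Inter>n. range (ifs_comp w s n))", OF l1 l2])
  then show "\<And>n. ifs_Gamma w s \<in> range (ifs_comp w s n)" using lin by simp
qed

lemma comp_conv:
  assumes "s \<in> H"
  shows "(\<lambda>n. ifs_comp w s n x) \<longlonglongrightarrow> ifs_Gamma w s"
proof -
  have "(\<lambda>n. dist (ifs_comp w s n x) (ifs_Gamma w s)) \<longlonglongrightarrow> 0"
  proof (rule tendsto_sandwich[OF _ _ tendsto_const H_lim[OF assms]])
    show "\<forall>\<^sub>F n in sequentially. 0 \<le> dist (ifs_comp w s n x) (ifs_Gamma w s)" by simp
    show "\<forall>\<^sub>F n in sequentially. dist (ifs_comp w s n x) (ifs_Gamma w s) \<le> diameter (range (ifs_comp w s n))"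
      using dist_le_diam[OF _ Gamma_props[OF assms]] by simp
  qed
  then show ?thesis by (rule tendsto_dist_iff[THEN iffD2])
qed

lemma H_sets: "H \<in> sets P"
proof (rule ccontr)
  assume "H \<notin> sets P"
  then have "measure P H = 0" by (rule measure_notin_sets)
  with hyp show False by simp
qed

definition G :: "(nat \<Rightarrow> 'l) \<Rightarrow> 'x" where
  "G s = (if s \<in> H then ifs_Gamma w s else undefined)"

lemma G_meas: "G \<in> borel_measurable P"
proof (rule borel_measurable_LIMSEQ_metric)
  show "(\<lambda>s. if s \<in> H then ifs_comp w s n undefined else undefined) \<in> borel_measurable P" for n
    by (rule measurable_If_set[OF comp_meas[OF measurable_ident_sets[OF refl] measurable_const] measurable_const])
       (auto simp: H_sets)
  show "(\<lambda>n. if s \<in> H then ifs_comp w s n undefined else undefined) \<longlonglongrightarrow> G s" for s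
    by (cases "s \<in> H") (auto simp: G_def comp_conv)
qed

definition mu0 :: "'x measure" where
  "mu0 = distr P borel G"

lemma mu0_pm: "mu0 \<in> prob_measures"
  unfolding prob_measures_def mu0_def
  using PS.prob_space_distr[OF G_meas] by simp

lemma AE_H: "AE s in P. s \<in> H"
  by (rule PS.AE_prob_1) (use hyp in simp)

lemma int_bound:
  fixes g :: "'a \<Rightarrow> real"
  assumes "prob_space M" "g \<in> borel_measurable M" "\<And>x. \<bar>g x\<bar> \<le> B"
  shows "\<bar>\<integral>x. g x \<partial>M\<bar> \<le> B"
proof -
  interpret prob_space M by fact
  have int: "integrable M g"
    by (rule integrable_const_bound[OF _ assms(2), of B]) (intro AE_I2, simp add: assms(3))
  have "\<bar>\<integral>x. g x \<partial>M\<bar> \<le> (\<integral>x. \<bar>g x\<bar> \<partial>M)" by (rule integral_abs_bound)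
  also have "\<dots> \<le> B"
    by (rule integral_le_const) (use int in simp, intro AE_I2, simp add: assms(3))
  finally show ?thesis .
qed

lemma conv_integral:
  fixes f :: "'x \<Rightarrow> real"
  assumes nu: "\<nu> \<in> prob_measures" and fc: "continuous_on UNIV f" and fb: "\<And>x. \<bar>f x\<bar> \<le> B"
  shows "(\<lambda>n. integral\<^sup>L ((transfer_op p w ^^ n) \<nu>) f) \<longlonglongrightarrow> integral\<^sup>L mu0 f"
proof -
  interpret N: prob_space \<nu> using pm_simps[OF nu] by simp
  interpret PP: pair_sigma_finite P \<nu>
    by (simp add: N.sigma_finite_measure_axioms pair_sigma_finite.intro PS.sigma_finite_measure_axioms)
  interpret PN: prob_space "P \<Otimes>\<^sub>M \<nu>" by (rule prob_space_pair[OF PS.prob_space_axioms N.prob_space_axioms])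
  have fm: "f \<in> borel_measurable borel" by (rule borel_measurable_continuous_onI[OF fc])
  have hm: "(\<lambda>z. f (case z of (s, x) \<Rightarrow> ifs_comp w s n x)) \<in> borel_measurable (P \<Otimes>\<^sub>M \<nu>)" for n
    using measurable_comp[OF g_meas[OF nu] fm] by (simp add: o_def)
  have eq: "integral\<^sup>L ((transfer_op p w ^^ n) \<nu>) f = (\<integral>s. (\<integral>x. f (ifs_comp w s n x) \<partial>\<nu>) \<partial>P)" for n
  proof -
    have "integral\<^sup>L ((transfer_op p w ^^ n) \<nu>) f = integral\<^sup>L (P \<Otimes>\<^sub>M \<nu>) (\<lambda>z. f (case z of (s, x) \<Rightarrow> ifs_comp w s n x))"
      unfolding T_iter[OF nu] by (rule integral_distr[OF g_meas[OF nu] fm])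
    also have "\<dots> = (\<integral>s. (\<integral>x. f (ifs_comp w s n x) \<partial>\<nu>) \<partial>P)"
      by (rule PP.integral_fst'[symmetric, where f="\<lambda>z. f (case z of (s, x) \<Rightarrow> ifs_comp w s n x)", simplified])
         (rule PN.integrable_const_bound[OF _ hm[of n], of B], intro AE_I2, simp add: fb)
    finally show ?thesis .
  qed
  have mi: "(\<lambda>x. f (ifs_comp w s n x)) \<in> borel_measurable \<nu>" for s n
  proof -
    have "(\<lambda>x. ifs_comp w s n x) \<in> borel_measurable \<nu>"
      by (rule comp_meas[OF measurable_const measurable_ident_sets[OF pm_simps(2)[OF nu]]]) simp
    from measurable_comp[OF this fm] show ?thesis by (simp add: o_def)
  qed
  have eq0: "integral\<^sup>L mu0 f = (\<integral>s. f (G s) \<partial>P)"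
    unfolding mu0_def by (rule integral_distr[OF G_meas fm])
  show ?thesis
    unfolding eq eq0
  proof (rule integral_dominated_convergence[of "\<lambda>s. f (G s)" P _ "\<lambda>_. B"])
    show "(\<lambda>s. f (G s)) \<in> borel_measurable P"
      using measurable_comp[OF G_meas fm] by (simp add: o_def)
    show "(\<lambda>s. \<integral>x. f (ifs_comp w s n x) \<partial>\<nu>) \<in> borel_measurable P" for n
    proof (rule N.borel_measurable_lebesgue_integral)
      show "(\<lambda>(s, x). f (ifs_comp w s n x)) \<in> borel_measurable (P \<Otimes>\<^sub>M \<nu>)"
        using hm[of n] by (simp add: split_beta')
    qed
    show "integrable P (\<lambda>_. B)" by simp
    show "AE s in P. norm (\<integral>x. f (ifs_comp w s n x) \<partial>\<nu>) \<le> B" for n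
    proof (intro AE_I2)
      fix s
      show "norm (\<integral>x. f (ifs_comp w s n x) \<partial>\<nu>) \<le> B"
        using int_bound[OF N.prob_space_axioms mi fb] by simp
    qed
    show "AE s in P. (\<lambda>n. \<integral>x. f (ifs_comp w s n x) \<partial>\<nu>) \<longlonglongrightarrow> f (G s)"
      using AE_H
    proof (rule AE_mp, intro AE_I2 impI)
      fix s assume sH: "s \<in> H"
      have "(\<lambda>n. \<integral>x. f (ifs_comp w s n x) \<partial>\<nu>) \<longlonglongrightarrow> (\<integral>x. f (ifs_Gamma w s) \<partial>\<nu>)"
      proof (rule integral_dominated_convergence[of "\<lambda>x. f (ifs_Gamma w s)" \<nu> _ "\<lambda>_. B"])
        show "(\<lambda>x. f (ifs_Gamma w s)) \<in> borel_measurable \<nu>" by simp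
        show "(\<lambda>x. f (ifs_comp w s n x)) \<in> borel_measurable \<nu>" for n
          by (rule mi)
        show "integrable \<nu> (\<lambda>_. B)" by simp
        show "AE x in \<nu>. (\<lambda>n. f (ifs_comp w s n x)) \<longlonglongrightarrow> f (ifs_Gamma w s)"
          by (intro AE_I2 continuous_on_tendsto_compose[OF fc comp_conv[OF sH]]) auto
        show "AE x in \<nu>. norm (f (ifs_comp w s n x)) \<le> B" for n
          by (intro AE_I2) (simp add: fb)
      qed
      then show "(\<lambda>n. \<integral>x. f (ifs_comp w s n x) \<partial>\<nu>) \<longlonglongrightarrow> f (G s)"
        using sH by (simp add: G_def N.prob_space)
    qed
  qed
qed

lemma pm_eqI:
  assumes mu: "\<mu> \<in> prob_measures" and nu: "\<nu> \<in> prob_measures"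
    and eq: "\<And>f :: 'x \<Rightarrow> real. continuous_on UNIV f \<Longrightarrow> (\<And>x. \<bar>f x\<bar> \<le> 1) \<Longrightarrow> integral\<^sup>L \<mu> f = integral\<^sup>L \<nu> f"
  shows "\<mu> = \<nu>"
proof -
  interpret M1: prob_space \<mu> using pm_simps[OF mu] by simp
  interpret M2: prob_space \<nu> using pm_simps[OF nu] by simp
  have lim: "(\<lambda>k. integral\<^sup>L M (\<lambda>x. max 0 (1 - real k * infdist x F))) \<longlonglongrightarrow> measure M F"
    if M: "M \<in> prob_measures" and F: "closed F" "F \<noteq> {}" for M F
  proof -
    interpret M: prob_space M using pm_simps[OF M] by simp
    have "(\<lambda>k. integral\<^sup>L M (\<lambda>x. max 0 (1 - real k * infdist x F))) \<longlonglongrightarrow> integral\<^sup>L M (indicator F)"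
    proof (rule integral_dominated_convergence[of "indicator F" M _ "\<lambda>_. 1"])
      show "indicator F \<in> borel_measurable M"
        using F(1) pm_simps(2)[OF M] by (simp add: measurable_cong_sets[OF _ refl, of M borel] borel_closed)
      show "(\<lambda>x. max 0 (1 - real k * infdist x F)) \<in> borel_measurable M" for k
      proof -
        have "(\<lambda>x. max 0 (1 - real k * infdist x F)) \<in> borel_measurable borel"
          by (intro borel_measurable_continuous_onI continuous_intros)
        then show ?thesis by (subst measurable_cong_sets[OF pm_simps(2)[OF M] refl])
      qed
      show "integrable M (\<lambda>_. 1::real)" by simp
      show "AE x in M. (\<lambda>k. max 0 (1 - real k * infdist x F)) \<longlonglongrightarrow> indicator F x"
      proof (intro AE_I2)
        fix x
        show "(\<lambda>k. max 0 (1 - real k * infdist x F)) \<longlonglongrightarrow> indicator F x"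
        proof (cases "x \<in> F")
          case True
          then have "infdist x F = 0" using in_closed_iff_infdist_zero[OF F] by simp
          then show ?thesis using True by simp
        next
          case False
          then have pos: "infdist x F > 0" using in_closed_iff_infdist_zero[OF F] infdist_nonneg[of x F] by simp
          obtain N :: nat where N: "1 / infdist x F < N" using reals_Archimedean2 by blast
          have "\<forall>\<^sub>F k in sequentially. max 0 (1 - real k * infdist x F) = 0"
          proof (rule eventually_sequentiallyI[of N])
            fix k assume "N \<le> k"
            then have "1 / infdist x F < real k" using N by linarith
            then have "1 < real k * infdist x F" using pos by (simp add: field_simps)
            then show "max 0 (1 - real k * infdist x F) = 0" by simp
          qed
          then have "(\<lambda>k. max 0 (1 - real k * infdist x F)) \<longlonglongrightarrow> 0"
            by (rule tendsto_eventually)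
          then show ?thesis using False by simp
        qed
      qed
      show "AE x in M. norm (max 0 (1 - real k * infdist x F)) \<le> 1" for k
        by (intro AE_I2) (simp add: infdist_nonneg)
    qed
    then show ?thesis using pm_simps(3)[OF M] by simp
  qed
  have closed_eq: "emeasure \<mu> F = emeasure \<nu> F" if F: "closed F" for F
  proof (cases "F = {}")
    case True then show ?thesis by simp
  next
    case False
    have "(\<lambda>k. integral\<^sup>L \<mu> (\<lambda>x. max 0 (1 - real k * infdist x F))) = (\<lambda>k. integral\<^sup>L \<nu> (\<lambda>x. max 0 (1 - real k * infdist x F)))"
    proof (rule ext, rule eq)
      show "continuous_on UNIV (\<lambda>x. max 0 (1 - real k * infdist x F))" for k
        by (intro continuous_intros)
      show "\<bar>max 0 (1 - real k * infdist x F)\<bar> \<le> 1" for k x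
        by (simp add: infdist_nonneg)
    qed
    then have "measure \<mu> F = measure \<nu> F"
      using lim[OF mu F False] lim[OF nu F False] LIMSEQ_unique by metis
    then show ?thesis by (simp add: M1.emeasure_eq_measure M2.emeasure_eq_measure)
  qed
  have sb: "sets (borel :: 'x measure) = sigma_sets UNIV (Collect closed)"
    by (subst borel_eq_closed) (simp add: sets_measure_of)
  show ?thesis
  proof (rule measure_eqI_generator_eq[where E="Collect closed" and \<Omega>=UNIV and A="\<lambda>_. UNIV"])
    show "Int_stable (Collect closed :: 'x set set)" by (auto simp: Int_stable_def)
    show "sets \<mu> = sigma_sets UNIV (Collect closed)" using pm_simps(2)[OF mu] sb by simp
    show "sets \<nu> = sigma_sets UNIV (Collect closed)" using pm_simps(2)[OF nu] sb by simp
  qed (auto simp: closed_eq)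
qed

lemma mu0_fixed: "transfer_op p w mu0 = mu0"
proof (rule pm_eqI[OF T_prob[OF mu0_pm] mu0_pm])
  fix f :: "'x \<Rightarrow> real" assume fc: "continuous_on UNIV f" and fb: "\<And>x. \<bar>f x\<bar> \<le> 1"
  have fm: "f \<in> borel_measurable borel" by (rule borel_measurable_continuous_onI[OF fc])
  let ?T = "transfer_op p w"
  have "(\<lambda>n. integral\<^sup>L ((?T ^^ Suc n) mu0) f) \<longlonglongrightarrow> integral\<^sup>L mu0 f"
    using conv_integral[OF mu0_pm fc fb] by (rule LIMSEQ_Suc)
  moreover have "(\<lambda>n. integral\<^sup>L ((?T ^^ Suc n) mu0) f) \<longlonglongrightarrow> integral\<^sup>L (?T mu0) f"
  proof -
    have pmn: "(?T ^^ n) mu0 \<in> prob_measures" for n by (rule T_iter_prob[OF mu0_pm])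
    have e1: "integral\<^sup>L ((?T ^^ Suc n) mu0) f = (\<integral>l. (\<integral>x. f (w l x) \<partial>((?T ^^ n) mu0)) \<partial>p)" for n
      using T_integral[OF pmn fm, of 1] fb by simp
    have e2: "integral\<^sup>L (?T mu0) f = (\<integral>l. (\<integral>x. f (w l x) \<partial>mu0) \<partial>p)"
      using T_integral[OF mu0_pm fm, of 1] fb by simp
    have fwm: "(\<lambda>x. f (w l x)) \<in> borel_measurable M" if "sets M = sets borel" for l M
    proof -
      have "(\<lambda>x. f (w l x)) \<in> borel_measurable borel"
        using measurable_comp[OF borel_measurable_continuous_onI[OF cont_w] fm] by (simp add: o_def)
      then show ?thesis by (subst measurable_cong_sets[OF that refl])
    qed
    show ?thesis unfolding e1 e2
    proof (rule integral_dominated_convergence[of "\<lambda>l. \<integral>x. f (w l x) \<partial>mu0" p _ "\<lambda>_. 1"])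
      show "(\<lambda>l. \<integral>x. f (w l x) \<partial>mu0) \<in> borel_measurable p"
      proof -
        interpret N: prob_space mu0 using pm_simps[OF mu0_pm] by simp
        show ?thesis
        proof (rule N.borel_measurable_lebesgue_integral)
          show "(\<lambda>(l, x). f (w l x)) \<in> borel_measurable (p \<Otimes>\<^sub>M mu0)"
            using measurable_comp[OF f_meas[OF mu0_pm] fm] by (simp add: o_def split_beta')
        qed
      qed
      show "(\<lambda>l. \<integral>x. f (w l x) \<partial>((?T ^^ n) mu0)) \<in> borel_measurable p" for n
      proof -
        interpret N: prob_space "(?T ^^ n) mu0" using pm_simps[OF pmn] by simp
        show ?thesis
        proof (rule N.borel_measurable_lebesgue_integral)
          show "(\<lambda>(l, x). f (w l x)) \<in> borel_measurable (p \<Otimes>\<^sub>M (?T ^^ n) mu0)"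
            using measurable_comp[OF f_meas[OF pmn] fm] by (simp add: o_def split_beta')
        qed
      qed
      interpret PR: prob_space p by (rule prob)
      show "integrable p (\<lambda>_. 1::real)" by simp
      show "AE l in p. (\<lambda>n. \<integral>x. f (w l x) \<partial>((?T ^^ n) mu0)) \<longlonglongrightarrow> (\<integral>x. f (w l x) \<partial>mu0)"
      proof (intro AE_I2)
        fix l
        have "continuous_on UNIV (\<lambda>x. f (w l x))"
          using continuous_on_compose[OF cont_w[of l] continuous_on_subset[OF fc subset_UNIV]] by (simp add: o_def)
        from conv_integral[OF mu0_pm this, of 1] fb
        show "(\<lambda>n. \<integral>x. f (w l x) \<partial>((?T ^^ n) mu0)) \<longlonglongrightarrow> (\<integral>x. f (w l x) \<partial>mu0)" by simp
      qed
      show "AE l in p. norm (\<integral>x. f (w l x) \<partial>((?T ^^ n) mu0)) \<le> 1" for n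
      proof (intro AE_I2)
        fix l
        show "norm (\<integral>x. f (w l x) \<partial>((?T ^^ n) mu0)) \<le> 1"
          using int_bound[OF pm_simps(1)[OF pmn] fwm[OF pm_simps(2)[OF pmn]], where B=1] fb by simp
      qed
    qed
  qed
  ultimately show "integral\<^sup>L (?T mu0) f = integral\<^sup>L mu0 f" by (rule LIMSEQ_unique[rotated])
qed

lemma fixed_unique:
  assumes mu: "\<mu> \<in> prob_measures" and fx: "transfer_op p w \<mu> = \<mu>"
  shows "\<mu> = mu0"
proof (rule pm_eqI[OF mu mu0_pm])
  fix f :: "'x \<Rightarrow> real" assume fc: "continuous_on UNIV f" and fb: "\<And>x. \<bar>f x\<bar> \<le> 1"
  have "(transfer_op p w ^^ n) \<mu> = \<mu>" for n by (induction n) (simp_all add: fx)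
  with conv_integral[OF mu fc fb] have "(\<lambda>n. integral\<^sup>L \<mu> f) \<longlonglongrightarrow> integral\<^sup>L mu0 f" by simp
  then show "integral\<^sup>L \<mu> f = integral\<^sup>L mu0 f" by (rule LIMSEQ_unique[OF tendsto_const])
qed

lemma weak_conv: "\<nu> \<in> prob_measures \<Longrightarrow> weak_star_conv (\<lambda>n. (transfer_op p w ^^ n) \<nu>) mu0"
  unfolding weak_star_conv_def
proof (intro allI impI, elim conjE)
  fix f :: "'x \<Rightarrow> real"
  assume nu: "\<nu> \<in> prob_measures" and fc: "continuous_on UNIV f" and "bounded (range f)"
  then obtain B where "\<forall>y\<in>range f. norm y \<le> B" by (auto simp: bounded_iff)
  then have fb: "\<bar>f x\<bar> \<le> B" for x by auto
  show "(\<lambda>n. integral\<^sup>L ((transfer_op p w ^^ n) \<nu>) f) \<longlonglongrightarrow> integral\<^sup>L mu0 f"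
    by (rule conv_integral[OF nu fc fb])
qed

lemma close_comp:
  assumes "e > 0"
  shows "\<exists>\<eta>>0. \<forall>t. (\<forall>i<n. dist (t i) (s i) < \<eta>) \<longrightarrow> (\<forall>y. dist (ifs_comp w t n y) (ifs_comp w s n y) < e)"
  using assms
proof (induction n arbitrary: e)
  case 0
  then show ?case by (intro exI[of _ 1]) simp
next
  case (Suc n)
  have e2: "e / 2 > 0" using Suc.prems by simp
  have "uniformly_continuous_on UNIV (ifs_comp w s n)"
    by (rule compact_uniformly_continuous[OF cont_comp cX])
  then obtain d1 where d1: "d1 > 0" "\<And>a b. dist a b < d1 \<Longrightarrow> dist (ifs_comp w s n a) (ifs_comp w s n b) < e / 2"
    using e2 unfolding uniformly_continuous_on_def by (metis UNIV_I dist_commute)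
  have cUU: "compact (UNIV :: ('l \<times> 'x) set)"
    using compact_Times[OF cL cX] by simp
  have "uniformly_continuous_on UNIV (\<lambda>(l, x). w l x)"
    by (rule compact_uniformly_continuous[OF cont cUU])
  then obtain d2 where d2: "d2 > 0" "\<And>z z'. dist z z' < d2 \<Longrightarrow> dist ((\<lambda>(l, x). w l x) z) ((\<lambda>(l, x). w l x) z') < d1"
    using d1(1) unfolding uniformly_continuous_on_def by (metis UNIV_I dist_commute)
  obtain h1 where h1: "h1 > 0" "\<And>t. (\<forall>i<n. dist (t i) (s i) < h1) \<Longrightarrow> (\<forall>y. dist (ifs_comp w t n y) (ifs_comp w s n y) < e / 2)"
    using Suc.IH[OF e2] by blast
  show ?case
  proof (intro exI[of _ "min h1 d2"] conjI allI impI)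
    show "min h1 d2 > 0" using h1(1) d2(1) by simp
    fix t :: "nat \<Rightarrow> 'l" and y :: 'x assume t: "\<forall>i<Suc n. dist (t i) (s i) < min h1 d2"
    have tn: "dist (t n) (s n) < d2" using t by auto
    have "dist (t n, y) (s n, y) < d2" using tn by (simp add: dist_Pair_Pair)
    then have ab: "dist (w (t n) y) (w (s n) y) < d1" using d2(2) by fastforce
    have IH: "dist (ifs_comp w t n a) (ifs_comp w s n a) < e / 2" for a
      using h1(2)[of t] t by auto
    have "dist (ifs_comp w t n (w (t n) y)) (ifs_comp w s n (w (s n) y))
        \<le> dist (ifs_comp w t n (w (t n) y)) (ifs_comp w s n (w (t n) y))
          + dist (ifs_comp w s n (w (t n) y)) (ifs_comp w s n (w (s n) y))"
      by (rule dist_triangle)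
    also have "\<dots> < e / 2 + e / 2"
      using IH d1(2)[OF ab] by (rule add_strict_mono)
    finally show "dist (ifs_comp w t (Suc n) y) (ifs_comp w s (Suc n) y) < e" by simp
  qed
qed

lemma supp_closed: "closed (measure_support mu0)"
  unfolding closed_def
proof (subst open_subopen, intro ballI)
  fix x assume "x \<in> - measure_support mu0"
  then obtain U where U: "open U" "x \<in> U" "\<not> emeasure mu0 U > 0"
    by (auto simp: measure_support_def)
  have "U \<subseteq> - measure_support mu0"
    using U by (auto simp: measure_support_def)
  then show "\<exists>T. open T \<and> x \<in> T \<and> T \<subseteq> - measure_support mu0" using U by blast
qed

lemma emeasure_mu0: "U \<in> sets borel \<Longrightarrow> emeasure mu0 U = emeasure P (G -` U)"
  unfolding mu0_def by (subst emeasure_distr[OF G_meas]) auto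

lemma null_H: "(UNIV - H) \<in> null_sets P"
proof -
  have s: "UNIV - H \<in> sets P" using H_sets by (metis sets.compl_sets space_P)
  have "measure P (space P - H) = 1 - measure P H" by (rule PS.prob_compl[OF H_sets])
  then have "measure P (UNIV - H) = 0" using hyp by simp
  then have "emeasure P (UNIV - H) = 0" by (simp add: PS.emeasure_eq_measure)
  then show ?thesis using s by (rule null_setsI)
qed

lemma supp_sub: "measure_support mu0 \<subseteq> closure (ifs_Gamma w ` H)"
proof
  fix x assume x: "x \<in> measure_support mu0"
  show "x \<in> closure (ifs_Gamma w ` H)"
  proof (rule ccontr)
    assume nx: "x \<notin> closure (ifs_Gamma w ` H)"
    let ?U = "- closure (ifs_Gamma w ` H)"
    have "open ?U" by auto
    then have pos: "emeasure mu0 ?U > 0" using x nx by (auto simp: measure_support_def)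
    have "G -` ?U \<subseteq> UNIV - H"
      using closure_subset[of "ifs_Gamma w ` H"] by (auto simp: G_def)
    then have "emeasure P (G -` ?U) \<le> emeasure P (UNIV - H)"
      by (rule emeasure_mono) (use null_H in auto)
    also have "\<dots> = 0" using null_H by auto
    finally have "emeasure mu0 ?U = 0"
      using emeasure_mu0[of ?U] \<open>open ?U\<close> by simp
    then show False using pos by simp
  qed
qed

lemma ennreal_prod_pos:
  fixes f :: "'a \<Rightarrow> ennreal"
  assumes "finite A" "\<And>a. a \<in> A \<Longrightarrow> 0 < f a"
  shows "0 < prod f A"
  using assms by (induction A rule: finite_induct) (auto simp: ennreal_zero_less_mult_iff)

lemma Gamma_in_supp:
  assumes full: "\<forall>U. open U \<and> U \<noteq> {} \<longrightarrow> emeasure p U > 0" and sH: "s \<in> H"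
  shows "ifs_Gamma w s \<in> measure_support mu0"
  unfolding measure_support_def
proof (intro CollectI allI impI, elim conjE)
  fix U :: "'x set" assume U: "open U" "ifs_Gamma w s \<in> U"
  obtain e where e: "e > 0" "ball (ifs_Gamma w s) e \<subseteq> U"
    using U by (meson open_contains_ball)
  have "\<forall>\<^sub>F n in sequentially. diameter (range (ifs_comp w s n)) < e / 2"
    using H_lim[OF sH] e(1) by (intro order_tendstoD(2)) auto
  then obtain n where n: "diameter (range (ifs_comp w s n)) < e / 2"
    using eventually_sequentially by auto
  obtain h where h: "h > 0" "\<And>t. (\<forall>i<n. dist (t i) (s i) < h) \<Longrightarrow> (\<forall>y. dist (ifs_comp w t n y) (ifs_comp w s n y) < e / 2)"
    using close_comp[of "e / 2" n s] e(1) by auto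
  define C where "C = prod_emb UNIV (\<lambda>_. p) {..<n} (\<Pi>\<^sub>E i\<in>{..<n}. ball (s i) h)"
  have Csets: "C \<in> sets P"
    unfolding C_def by (intro measurable_prod_emb sets_PiM_I_finite) (auto simp: sp)
  have CP: "emeasure P C = (\<Prod>i<n. emeasure p (ball (s i) h))"
    unfolding C_def by (rule PS.emeasure_PiM_emb) (auto simp: sp)
  have "(\<Prod>i<n. emeasure p (ball (s i) h)) > 0"
  proof (rule ennreal_prod_pos)
    fix i
    have "s i \<in> ball (s i) h" using h(1) by simp
    then have "ball (s i) h \<noteq> {}" by blast
    then show "emeasure p (ball (s i) h) > 0"
      using full[rule_format, of "ball (s i) h"] by simp
  qed simp
  then have Cpos: "emeasure P C > 0" using CP by simp
  have sub: "C - (UNIV - H) \<subseteq> G -` U"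
  proof
    fix t assume t: "t \<in> C - (UNIV - H)"
    then have tH: "t \<in> H" by simp
    have "\<forall>i<n. dist (t i) (s i) < h"
      using t by (auto simp: C_def prod_emb_iff dist_commute)
    then have close: "\<And>y. dist (ifs_comp w t n y) (ifs_comp w s n y) < e / 2" using h(2) by blast
    obtain y where y: "ifs_Gamma w t = ifs_comp w t n y" using Gamma_props[OF tH, of n] by auto
    have "dist (ifs_comp w s n y) (ifs_Gamma w s) \<le> diameter (range (ifs_comp w s n))"
      by (rule dist_le_diam[OF _ Gamma_props[OF sH]]) simp
    then have "dist (ifs_Gamma w t) (ifs_Gamma w s) < e"
      using close[of y] n y dist_triangle[of "ifs_comp w t n y" "ifs_Gamma w s" "ifs_comp w s n y"] by simp
    then have "ifs_Gamma w t \<in> U" using e(2) by (auto simp: dist_commute)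
    then show "t \<in> G -` U" using tH by (simp add: G_def)
  qed
  have "emeasure P C = emeasure P (C - (UNIV - H))"
    by (rule emeasure_Diff_null_set[OF null_H Csets, symmetric])
  also have "\<dots> \<le> emeasure P (G -` U)"
  proof (rule emeasure_mono[OF sub])
    show "G -` U \<in> sets P" using measurable_sets[OF G_meas, of U] U(1) by simp
  qed
  also have "\<dots> = emeasure mu0 U" using emeasure_mu0[of U] U(1) by simp
  finally show "emeasure mu0 U > 0" using Cpos by simp
qed

lemma supp_eq:
  assumes full: "\<forall>U. open U \<and> U \<noteq> {} \<longrightarrow> emeasure p U > 0"
  shows "measure_support mu0 = closure (ifs_Gamma w ` H)"
proof
  show "measure_support mu0 \<subseteq> closure (ifs_Gamma w ` H)" by (rule supp_sub)
  show "closure (ifs_Gamma w ` H) \<subseteq> measure_support mu0"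
    by (rule closure_minimal[OF _ supp_closed]) (use Gamma_in_supp[OF full] in blast)
qed

lemma main:
  "\<exists>\<mu>. \<mu> \<in> prob_measures \<and> transfer_op p w \<mu> = \<mu>
          \<and> (\<forall>\<mu>'\<in>prob_measures. transfer_op p w \<mu>' = \<mu>' \<longrightarrow> \<mu>' = \<mu>)
          \<and> (\<forall>\<nu>\<in>prob_measures. weak_star_conv (\<lambda>n. (transfer_op p w ^^ n) \<nu>) \<mu>)
          \<and> ((\<forall>U. open U \<and> U \<noteq> {} \<longrightarrow> emeasure p U > 0) \<longrightarrow>
               measure_support \<mu> = closure (ifs_Gamma w ` hyp_set w))"
  using mu0_pm mu0_fixed fixed_unique weak_conv supp_eq by blast

end


theorem theorem1:
  fixes w :: "'l::metric_space \<Rightarrow> 'x::metric_space \<Rightarrow> 'x"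
    and p :: "'l measure"
  assumes "compact (UNIV :: 'x set)"
    and "compact (UNIV :: 'l set)"
    and "continuous_on UNIV (\<lambda>(l, x). w l x)"
    and "prob_space p" and "sets p = sets borel"
    and "measure (\<Pi>\<^sub>M i\<in>(UNIV :: nat set). p) (hyp_set w) = 1"
  shows "\<exists>\<mu>. \<mu> \<in> prob_measures \<and> transfer_op p w \<mu> = \<mu>
          \<and> (\<forall>\<mu>'\<in>prob_measures. transfer_op p w \<mu>' = \<mu>' \<longrightarrow> \<mu>' = \<mu>)
          \<and> (\<forall>\<nu>\<in>prob_measures. weak_star_conv (\<lambda>n. (transfer_op p w ^^ n) \<nu>) \<mu>)
          \<and> ((\<forall>U. open U \<and> U \<noteq> {} \<longrightarrow> emeasure p U > 0) \<longrightarrow>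
               measure_support \<mu> = closure (ifs_Gamma w ` hyp_set w))"
proof -
  have I: "ifs w p" unfolding ifs_def using assms by blast
  interpret ifs w p by (rule I)
  show ?thesis by (rule main)
qed

end
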